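(* Let $\mathcal{C}$ be a monoidal C*-category and let $\perp$ be a symmetric binary relation on the set of objects of $\mathcal{C}$ such that: (1) if $\rho_1\perp\rho_2$ then $\rho_1\rho_2=\rho_2\rho_1$; (2) if $t_j:\sigma_j\to\tau_j$ ($j=1,2$) with $\sigma_1\perp\sigma_2$ and $\tau_1\perp\tau_2$, then $t_1\otimes t_2=t_2\otimes t_1$; (3) there exist two full monoidal C*-subcategories $\mathcal{C}_1,\mathcal{C}_2\subset\mathcal{C}$, each equivalent to $\mathcal{C}$, with $\rho_1\perp\rho_2$ for all objects $\rho_1\in\mathcal{C}_1$, $\rho_2\in\mathcal{C}_2$. Then $\mathcal{C}$ possesses a unique symmetry $\epsilon$ satisfying $\epsilon(\rho_1,\rho_2)=\mathbf{1}_{\rho_1\rho_2}$ whenever $\rho_1\perp\rho_2$.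
   Context: A monoidal C*-category: a C*-category (complex Banach morphism spaces $I(\sigma,\tau)$, bilinear composition with $\|s\circ t\|\le\|s\|\|t\|$, antilinear involution $*$ with $(s\circ t)^*=t^*\circ s^*$ and $\|t^*t\|=\|t\|^2$) with associative products $\sigma\tau$ on objects and $\otimes$ on morphisms, $t_1\otimes t_2:\sigma_1\sigma_2\to\tau_1\tau_2$, $\mathbf{1}_{\rho_1}\otimes\mathbf{1}_{\rho_2}=\mathbf{1}_{\rho_1\rho_2}$, $(s_1\circ t_1)\otimes(s_2\circ t_2)=(s_1\otimes s_2)\circ(t_1\otimes t_2)$, a unit object $\iota$ neutral for the object product with $\mathbf{1}_\iota$ neutral for $\otimes$, $\otimes$ bilinear and $(t_1\otimes t_2)^*=t_1^*\otimes t_2^*$. A full monoidal C*-subcategory is a full subcategory containing $\iota$ and closed under the object product; it is equivalent to $\mathcal{C}$ if every object of $\mathcal{C}$ is unitarily equivalent (isomorphic via a unitary morphism) to an object of the subcategory. A symmetry is a family of unitaries $\epsilon(\sigma,\tau):\sigma\tau\to\tau\sigma$ with $\epsilon(\sigma,\tau)^*=\epsilon(\tau,\sigma)$, $\epsilon(\iota,\rho)=\epsilon(\rho,\iota)=\mathbf{1}_\rho$, $\epsilon(\sigma\rho,\tau)=(\epsilon(\sigma,\tau)\otimes\mathbf{1}_\rho)\circ(\mathbf{1}_\sigma\otimes\epsilon(\rho,\tau))$, and $\epsilon(\tau_1,\tau_2)\circ(t_1\otimes t_2)=(t_2\otimes t_1)\circ\epsilon(\sigma_1,\sigma_2)$ for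 all $t_j:\sigma_j\to\tau_j$. *)

theory Defs
  imports Complex_Main
begin

text \<open>All morphism spaces I(sigma,tau) are
  realised as closed complex subspaces Hom sigma tau of one ambient complex Banach
  space (real Banach space 'm together with a complex scalar multiplication scC).\<close>

record ('o, 'm) mcstar =
  Hom   :: "'o \<Rightarrow> 'o \<Rightarrow> 'm set"
  cmp   :: "'m \<Rightarrow> 'm \<Rightarrow> 'm"
  idm   :: "'o \<Rightarrow> 'm"
  adj   :: "'m \<Rightarrow> 'm"
  tns   :: "'m \<Rightarrow> 'm \<Rightarrow> 'm"
  oprod :: "'o \<Rightarrow> 'o \<Rightarrow> 'o"
  ounit :: "'o"
  scC   :: "complex \<Rightarrow> 'm \<Rightarrow> 'm"

definition complex_scaling :: "(complex \<Rightarrow> 'm::banach \<Rightarrow> 'm) \<Rightarrow> bool" where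
  "complex_scaling sc \<longleftrightarrow>
     (\<forall>r x. sc (complex_of_real r) x = r *\<^sub>R x) \<and>
     (\<forall>a b x. sc (a + b) x = sc a x + sc b x) \<and>
     (\<forall>a x y. sc a (x + y) = sc a x + sc a y) \<and>
     (\<forall>a b x. sc (a * b) x = sc a (sc b x)) \<and>
     (\<forall>a x. norm (sc a x) = cmod a * norm x)"

definition closed_csubspace :: "(complex \<Rightarrow> 'm::banach \<Rightarrow> 'm) \<Rightarrow> 'm set \<Rightarrow> bool" where
  "closed_csubspace sc V \<longleftrightarrow> 0 \<in> V \<and> (\<forall>x\<in>V. \<forall>y\<in>V. x + y \<in> V) \<and>
     (\<forall>c. \<forall>x\<in>V. sc c x \<in> V) \<and> closed V"

definition cstar_category :: "('o, 'm::banach) mcstar \<Rightarrow> bool" where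
  "cstar_category C \<longleftrightarrow>
     complex_scaling (scC C) \<and>
     (\<forall>\<sigma> \<tau>. closed_csubspace (scC C) (Hom C \<sigma> \<tau>)) \<and>
     \<comment> \<open>composition\<close>
     (\<forall>\<sigma> \<tau> \<rho>. \<forall>s\<in>Hom C \<tau> \<rho>. \<forall>t\<in>Hom C \<sigma> \<tau>. cmp C s t \<in> Hom C \<sigma> \<rho>) \<and>
     (\<forall>\<sigma> \<tau> \<rho> \<pi>. \<forall>r\<in>Hom C \<rho> \<pi>. \<forall>s\<in>Hom C \<tau> \<rho>. \<forall>t\<in>Hom C \<sigma> \<tau>.
        cmp C r (cmp C s t) = cmp C (cmp C r s) t) \<and>
     (\<forall>\<sigma>. idm C \<sigma> \<in> Hom C \<sigma> \<sigma>) \<and>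
     (\<forall>\<sigma> \<tau>. \<forall>t\<in>Hom C \<sigma> \<tau>. cmp C (idm C \<tau>) t = t \<and> cmp C t (idm C \<sigma>) = t) \<and>
     (\<forall>\<sigma> \<tau> \<rho>. \<forall>s\<in>Hom C \<tau> \<rho>. \<forall>s'\<in>Hom C \<tau> \<rho>. \<forall>t\<in>Hom C \<sigma> \<tau>. \<forall>t'\<in>Hom C \<sigma> \<tau>. \<forall>c.
        cmp C (s + s') t = cmp C s t + cmp C s' t \<and>
        cmp C s (t + t') = cmp C s t + cmp C s t' \<and>
        cmp C (scC C c s) t = scC C c (cmp C s t) \<and>
        cmp C s (scC C c t) = scC C c (cmp C s t)) \<and>
     (\<forall>\<sigma> \<tau> \<rho>. \<forall>s\<in>Hom C \<tau> \<rho>. \<forall>t\<in>Hom C \<sigma> \<tau>. norm (cmp C s t) \<le> norm s * norm t) \<and>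
     \<comment> \<open>involution\<close>
     (\<forall>\<sigma> \<tau>. \<forall>t\<in>Hom C \<sigma> \<tau>. adj C t \<in> Hom C \<tau> \<sigma> \<and> adj C (adj C t) = t \<and>
        norm (cmp C (adj C t) t) = (norm t)\<^sup>2) \<and>
     (\<forall>\<sigma> \<tau>. \<forall>s\<in>Hom C \<sigma> \<tau>. \<forall>t\<in>Hom C \<sigma> \<tau>. \<forall>c.
        adj C (s + t) = adj C s + adj C t \<and> adj C (scC C c t) = scC C (cnj c) (adj C t)) \<and>
     (\<forall>\<sigma> \<tau> \<rho>. \<forall>s\<in>Hom C \<tau> \<rho>. \<forall>t\<in>Hom C \<sigma> \<tau>.
        adj C (cmp C s t) = cmp C (adj C t) (adj C s))"

definition monoidal_cstar_category :: "('o, 'm::banach) mcstar \<Rightarrow> bool" where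
  "monoidal_cstar_category C \<longleftrightarrow>
     cstar_category C \<and>
     (\<forall>a b c. oprod C (oprod C a b) c = oprod C a (oprod C b c)) \<and>
     (\<forall>a. oprod C (ounit C) a = a \<and> oprod C a (ounit C) = a) \<and>
     (\<forall>\<sigma>1 \<tau>1 \<sigma>2 \<tau>2. \<forall>t1\<in>Hom C \<sigma>1 \<tau>1. \<forall>t2\<in>Hom C \<sigma>2 \<tau>2.
        tns C t1 t2 \<in> Hom C (oprod C \<sigma>1 \<sigma>2) (oprod C \<tau>1 \<tau>2) \<and>
        adj C (tns C t1 t2) = tns C (adj C t1) (adj C t2)) \<and>
     (\<forall>\<sigma>1 \<tau>1 \<sigma>2 \<tau>2 \<sigma>3 \<tau>3. \<forall>t1\<in>Hom C \<sigma>1 \<tau>1. \<forall>t2\<in>Hom C \<sigma>2 \<tau>2. \<forall>t3\<in>Hom C \<sigma>3 \<tau>3.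
        tns C (tns C t1 t2) t3 = tns C t1 (tns C t2 t3)) \<and>
     (\<forall>a b. tns C (idm C a) (idm C b) = idm C (oprod C a b)) \<and>
     (\<forall>\<sigma> \<tau>. \<forall>t\<in>Hom C \<sigma> \<tau>. tns C (idm C (ounit C)) t = t \<and> tns C t (idm C (ounit C)) = t) \<and>
     (\<forall>\<sigma>1 \<tau>1 \<rho>1 \<sigma>2 \<tau>2 \<rho>2. \<forall>s1\<in>Hom C \<tau>1 \<rho>1. \<forall>t1\<in>Hom C \<sigma>1 \<tau>1.
        \<forall>s2\<in>Hom C \<tau>2 \<rho>2. \<forall>t2\<in>Hom C \<sigma>2 \<tau>2.
        tns C (cmp C s1 t1) (cmp C s2 t2) = cmp C (tns C s1 s2) (tns C t1 t2)) \<and>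
     (\<forall>\<sigma>1 \<tau>1 \<sigma>2 \<tau>2. \<forall>s\<in>Hom C \<sigma>1 \<tau>1. \<forall>s'\<in>Hom C \<sigma>1 \<tau>1.
        \<forall>t\<in>Hom C \<sigma>2 \<tau>2. \<forall>t'\<in>Hom C \<sigma>2 \<tau>2. \<forall>c.
        tns C (s + s') t = tns C s t + tns C s' t \<and>
        tns C s (t + t') = tns C s t + tns C s t' \<and>
        tns C (scC C c s) t = scC C c (tns C s t) \<and>
        tns C s (scC C c t) = scC C c (tns C s t))"

definition unitary :: "('o, 'm::banach) mcstar \<Rightarrow> 'o \<Rightarrow> 'o \<Rightarrow> 'm \<Rightarrow> bool" where
  "unitary C \<sigma> \<tau> u \<longleftrightarrow> u \<in> Hom C \<sigma> \<tau> \<and>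
     cmp C (adj C u) u = idm C \<sigma> \<and> cmp C u (adj C u) = idm C \<tau>"

text \<open>A full monoidal C*-subcategory is determined by its set of objects.\<close>
definition full_monoidal_subcat :: "('o, 'm::banach) mcstar \<Rightarrow> 'o set \<Rightarrow> bool" where
  "full_monoidal_subcat C S \<longleftrightarrow> ounit C \<in> S \<and> (\<forall>a\<in>S. \<forall>b\<in>S. oprod C a b \<in> S)"

definition equivalent_subcat :: "('o, 'm::banach) mcstar \<Rightarrow> 'o set \<Rightarrow> bool" where
  "equivalent_subcat C S \<longleftrightarrow> (\<forall>\<rho>. \<exists>\<rho>'\<in>S. \<exists>u. unitary C \<rho> \<rho>' u)"

definition symmetry :: "('o, 'm::banach) mcstar \<Rightarrow> ('o \<Rightarrow> 'o \<Rightarrow> 'm) \<Rightarrow> bool" where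
  "symmetry C \<epsilon> \<longleftrightarrow>
     (\<forall>\<sigma> \<tau>. unitary C (oprod C \<sigma> \<tau>) (oprod C \<tau> \<sigma>) (\<epsilon> \<sigma> \<tau>)) \<and>
     (\<forall>\<sigma> \<tau>. adj C (\<epsilon> \<sigma> \<tau>) = \<epsilon> \<tau> \<sigma>) \<and>
     (\<forall>\<rho>. \<epsilon> (ounit C) \<rho> = idm C \<rho> \<and> \<epsilon> \<rho> (ounit C) = idm C \<rho>) \<and>
     (\<forall>\<sigma> \<rho> \<tau>. \<epsilon> (oprod C \<sigma> \<rho>) \<tau> =
        cmp C (tns C (\<epsilon> \<sigma> \<tau>) (idm C \<rho>)) (tns C (idm C \<sigma>) (\<epsilon> \<rho> \<tau>))) \<and>
     (\<forall>\<sigma>1 \<tau>1 \<sigma>2 \<tau>2. \<forall>t1\<in>Hom C \<sigma>1 \<tau>1. \<forall>t2\<in>Hom C \<sigma>2 \<tau>2.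
        cmp C (\<epsilon> \<tau>1 \<tau>2) (tns C t1 t2) = cmp C (tns C t2 t1) (\<epsilon> \<sigma>1 \<sigma>2))"

end

theory Submission
  imports Defs
begin

locale mc =
  fixes C :: "('o, 'm::banach) mcstar"
  assumes mc: "monoidal_cstar_category C"
begin

lemmas M = mc[unfolded monoidal_cstar_category_def]
lemmas CS = M[THEN conjunct1, unfolded cstar_category_def]

lemmas CS0 = CS[THEN conjunct1]
lemmas CS1 = CS[THEN conjunct2, THEN conjunct1]
lemmas CS2 = CS[THEN conjunct2, THEN conjunct2, THEN conjunct1]
lemmas CS3 = CS[THEN conjunct2, THEN conjunct2, THEN conjunct2, THEN conjunct1]
lemmas CS4 = CS[THEN conjunct2, THEN conjunct2, THEN conjunct2, THEN conjunct2, THEN conjunct1]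
lemmas CS5 = CS[THEN conjunct2, THEN conjunct2, THEN conjunct2, THEN conjunct2, THEN conjunct2, THEN conjunct1]
lemmas CS6 = CS[THEN conjunct2, THEN conjunct2, THEN conjunct2, THEN conjunct2, THEN conjunct2, THEN conjunct2, THEN conjunct1]
lemmas CS7 = CS[THEN conjunct2, THEN conjunct2, THEN conjunct2, THEN conjunct2, THEN conjunct2, THEN conjunct2, THEN conjunct2, THEN conjunct1]
lemmas CS8 = CS[THEN conjunct2, THEN conjunct2, THEN conjunct2, THEN conjunct2, THEN conjunct2, THEN conjunct2, THEN conjunct2, THEN conjunct2, THEN conjunct1]
lemmas CS9 = CS[THEN conjunct2, THEN conjunct2, THEN conjunct2, THEN conjunct2, THEN conjunct2, THEN conjunct2, THEN conjunct2, THEN conjunct2, THEN conjunct2, THEN conjunct1]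
lemmas CS10 = CS[THEN conjunct2, THEN conjunct2, THEN conjunct2, THEN conjunct2, THEN conjunct2, THEN conjunct2, THEN conjunct2, THEN conjunct2, THEN conjunct2, THEN conjunct2]
lemmas M0 = M[THEN conjunct1]
lemmas M1 = M[THEN conjunct2, THEN conjunct1]
lemmas M2 = M[THEN conjunct2, THEN conjunct2, THEN conjunct1]
lemmas M3 = M[THEN conjunct2, THEN conjunct2, THEN conjunct2, THEN conjunct1]
lemmas M4 = M[THEN conjunct2, THEN conjunct2, THEN conjunct2, THEN conjunct2, THEN conjunct1]
lemmas M5 = M[THEN conjunct2, THEN conjunct2, THEN conjunct2, THEN conjunct2, THEN conjunct2, THEN conjunct1]
lemmas M6 = M[THEN conjunct2, THEN conjunct2, THEN conjunct2, THEN conjunct2, THEN conjunct2, THEN conjunct2, THEN conjunct1]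
lemmas M7 = M[THEN conjunct2, THEN conjunct2, THEN conjunct2, THEN conjunct2, THEN conjunct2, THEN conjunct2, THEN conjunct2, THEN conjunct1]
lemmas M8 = M[THEN conjunct2, THEN conjunct2, THEN conjunct2, THEN conjunct2, THEN conjunct2, THEN conjunct2, THEN conjunct2, THEN conjunct2]

lemma cmp_hom: "s \<in> Hom C \<tau> \<rho> \<Longrightarrow> t \<in> Hom C \<sigma> \<tau> \<Longrightarrow> cmp C s t \<in> Hom C \<sigma> \<rho>"
  using CS2 by blast
lemma cmp_assoc: "r \<in> Hom C \<rho> \<pi> \<Longrightarrow> s \<in> Hom C \<tau> \<rho> \<Longrightarrow> t \<in> Hom C \<sigma> \<tau> \<Longrightarrow>
   cmp C r (cmp C s t) = cmp C (cmp C r s) t"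
  using CS3 by blast
lemma idm_hom: "idm C \<sigma> \<in> Hom C \<sigma> \<sigma>"
  using CS4 by blast
lemma id_l: "t \<in> Hom C \<sigma> \<tau> \<Longrightarrow> cmp C (idm C \<tau>) t = t"
  using CS5 by blast
lemma id_r: "t \<in> Hom C \<sigma> \<tau> \<Longrightarrow> cmp C t (idm C \<sigma>) = t"
  using CS5 by blast
lemma adj_hom: "t \<in> Hom C \<sigma> \<tau> \<Longrightarrow> adj C t \<in> Hom C \<tau> \<sigma>"
  using CS8 by blast
lemma adj_adj: "t \<in> Hom C \<sigma> \<tau> \<Longrightarrow> adj C (adj C t) = t"
  using CS8 by blast
lemma adj_cmp: "s \<in> Hom C \<tau> \<rho> \<Longrightarrow> t \<in> Hom C \<sigma> \<tau> \<Longrightarrow> adj C (cmp C s t) = cmp C (adj C t) (adj C s)"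
  using CS10 by blast
lemma oassoc: "oprod C (oprod C a b) c = oprod C a (oprod C b c)"
  using M1 by blast
lemma tns_hom: "t1 \<in> Hom C \<sigma>1 \<tau>1 \<Longrightarrow> t2 \<in> Hom C \<sigma>2 \<tau>2 \<Longrightarrow>
   tns C t1 t2 \<in> Hom C (oprod C \<sigma>1 \<sigma>2) (oprod C \<tau>1 \<tau>2)"
  using M3 by blast
lemma tns_adj: "t1 \<in> Hom C \<sigma>1 \<tau>1 \<Longrightarrow> t2 \<in> Hom C \<sigma>2 \<tau>2 \<Longrightarrow>
   adj C (tns C t1 t2) = tns C (adj C t1) (adj C t2)"
  using M3 by blast
lemma tns_assoc: "t1 \<in> Hom C \<sigma>1 \<tau>1 \<Longrightarrow> t2 \<in> Hom C \<sigma>2 \<tau>2 \<Longrightarrow> t3 \<in> Hom C \<sigma>3 \<tau>3 \<Longrightarrow>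
   tns C (tns C t1 t2) t3 = tns C t1 (tns C t2 t3)"
  using M4 by blast
lemma tns_idm: "tns C (idm C a) (idm C b) = idm C (oprod C a b)"
  using M5 by blast
lemma tns_unit_l: "t \<in> Hom C \<sigma> \<tau> \<Longrightarrow> tns C (idm C (ounit C)) t = t"
  using M6 by blast
lemma tns_unit_r: "t \<in> Hom C \<sigma> \<tau> \<Longrightarrow> tns C t (idm C (ounit C)) = t"
  using M6 by blast
lemma interchange: "s1 \<in> Hom C \<tau>1 \<rho>1 \<Longrightarrow> t1 \<in> Hom C \<sigma>1 \<tau>1 \<Longrightarrow> s2 \<in> Hom C \<tau>2 \<rho>2 \<Longrightarrow> t2 \<in> Hom C \<sigma>2 \<tau>2 \<Longrightarrow>
   tns C (cmp C s1 t1) (cmp C s2 t2) = cmp C (tns C s1 s2) (tns C t1 t2)"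
  using M7 by blast

lemma adj_idm: "adj C (idm C a) = idm C a"
proof -
  have h: "adj C (idm C a) \<in> Hom C a a" by (rule adj_hom[OF idm_hom])
  have "adj C (idm C a) = cmp C (adj C (idm C a)) (idm C a)" using id_r[OF h] by simp
  hence "adj C (adj C (idm C a)) = adj C (cmp C (adj C (idm C a)) (idm C a))" by simp
  also have "\<dots> = cmp C (adj C (idm C a)) (adj C (adj C (idm C a)))"
    using adj_cmp[OF h idm_hom] .
  also have "\<dots> = cmp C (adj C (idm C a)) (idm C a)" using adj_adj[OF idm_hom] by simp
  also have "\<dots> = adj C (idm C a)" using id_r[OF h] .
  finally show ?thesis using adj_adj[OF idm_hom] by simp
qed

lemma unitary_hom: "unitary C a b u \<Longrightarrow> u \<in> Hom C a b" by (simp add: unitary_def)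

lemma unitary_adj: "unitary C a b u \<Longrightarrow> unitary C b a (adj C u)"
  unfolding unitary_def using adj_hom adj_adj by metis

lemma unitary_idm: "unitary C a a (idm C a)"
  unfolding unitary_def using adj_idm idm_hom id_l by metis

lemma unitary_cmp:
  assumes V: "unitary C a b V" and W: "unitary C b c W"
  shows "unitary C a c (cmp C W V)"
proof -
  have v: "V \<in> Hom C a b" and w: "W \<in> Hom C b c" using V W by (simp_all add: unitary_def)
  have va: "adj C V \<in> Hom C b a" and wa: "adj C W \<in> Hom C c b" using adj_hom v w by auto
  have a: "adj C (cmp C W V) = cmp C (adj C V) (adj C W)" using adj_cmp[OF w v] .
  have wv: "cmp C W V \<in> Hom C a c" using cmp_hom[OF w v] .
  have "cmp C (cmp C (adj C V) (adj C W)) (cmp C W V) = cmp C (adj C V) (cmp C (adj C W) (cmp C W V))"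
    using cmp_assoc[OF va wa wv] by simp
  also have "\<dots> = cmp C (adj C V) (cmp C (cmp C (adj C W) W) V)" using cmp_assoc[OF wa w v] by simp
  also have "\<dots> = idm C a" using V W id_l[OF v] unfolding unitary_def by simp
  finally have 1: "cmp C (adj C (cmp C W V)) (cmp C W V) = idm C a" using a by simp
  have wva: "cmp C (adj C V) (adj C W) \<in> Hom C c a" using cmp_hom[OF va wa] .
  have "cmp C (cmp C W V) (cmp C (adj C V) (adj C W)) = cmp C W (cmp C V (cmp C (adj C V) (adj C W)))"
    using cmp_assoc[OF w v wva] by simp
  also have "\<dots> = cmp C W (cmp C (cmp C V (adj C V)) (adj C W))" using cmp_assoc[OF v va wa] by simp
  also have "\<dots> = idm C c" using V W id_l[OF wa] unfolding unitary_def by simp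
  finally have 2: "cmp C (cmp C W V) (adj C (cmp C W V)) = idm C c" using a by simp
  show ?thesis using 1 2 wv unfolding unitary_def by simp
qed

lemma unitary_tns:
  assumes U: "unitary C a b u" and V: "unitary C c d v"
  shows "unitary C (oprod C a c) (oprod C b d) (tns C u v)"
proof -
  have u: "u \<in> Hom C a b" and v: "v \<in> Hom C c d" using U V by (simp_all add: unitary_def)
  have ua: "adj C u \<in> Hom C b a" and va: "adj C v \<in> Hom C d c" using adj_hom u v by auto
  have a: "adj C (tns C u v) = tns C (adj C u) (adj C v)" using tns_adj[OF u v] .
  have 1: "cmp C (tns C (adj C u) (adj C v)) (tns C u v) = idm C (oprod C a c)"
    using interchange[OF ua u va v, symmetric] U V tns_idm unfolding unitary_def by simp
  have 2: "cmp C (tns C u v) (tns C (adj C u) (adj C v)) = idm C (oprod C b d)"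
    using interchange[OF u ua v va, symmetric] U V tns_idm unfolding unitary_def by simp
  show ?thesis using 1 2 a tns_hom[OF u v] unfolding unitary_def by simp
qed

lemma solve:
  assumes W: "unitary C a b W" and X: "X \<in> Hom C c a" and e: "cmp C W X = Y"
  shows "X = cmp C (adj C W) Y"
proof -
  have w: "W \<in> Hom C a b" using W by (simp add: unitary_def)
  have "cmp C (adj C W) Y = cmp C (cmp C (adj C W) W) X"
    using e cmp_assoc[OF adj_hom[OF w] w X] by simp
  also have "\<dots> = X" using W id_l[OF X] by (simp add: unitary_def)
  finally show ?thesis by simp
qed

end

locale ms = mc C for C :: "('o, 'm::banach) mcstar" +
  fixes perp :: "'o \<Rightarrow> 'o \<Rightarrow> bool" and S1 S2 :: "'o set"
  assumes psym: "perp a b \<Longrightarrow> perp b a"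
    and pcomm: "perp a b \<Longrightarrow> oprod C a b = oprod C b a"
    and ptns: "t1 \<in> Hom C \<sigma>1 \<tau>1 \<Longrightarrow> t2 \<in> Hom C \<sigma>2 \<tau>2 \<Longrightarrow> perp \<sigma>1 \<sigma>2 \<Longrightarrow> perp \<tau>1 \<tau>2
       \<Longrightarrow> tns C t1 t2 = tns C t2 t1"
    and fS1: "full_monoidal_subcat C S1" and eS1: "equivalent_subcat C S1"
    and fS2: "full_monoidal_subcat C S2" and eS2: "equivalent_subcat C S2"
    and pS: "\<rho>1 \<in> S1 \<Longrightarrow> \<rho>2 \<in> S2 \<Longrightarrow> perp \<rho>1 \<rho>2"
begin

lemma gen:
  assumes hom: "\<forall>\<sigma> \<tau>. E \<sigma> \<tau> \<in> Hom C (oprod C \<sigma> \<tau>) (oprod C \<tau> \<sigma>)"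
    and nat: "\<forall>\<sigma>1 \<tau>1 \<sigma>2 \<tau>2. \<forall>t1\<in>Hom C \<sigma>1 \<tau>1. \<forall>t2\<in>Hom C \<sigma>2 \<tau>2.
        cmp C (E \<tau>1 \<tau>2) (tns C t1 t2) = cmp C (tns C t2 t1) (E \<sigma>1 \<sigma>2)"
    and pid: "\<forall>a b. perp a b \<longrightarrow> E a b = idm C (oprod C a b)"
    and U: "unitary C \<sigma> \<alpha> u" and V: "unitary C \<tau> \<beta> v" and p: "perp \<alpha> \<beta>"
  shows "E \<sigma> \<tau> = cmp C (adj C (tns C v u)) (tns C u v)"
proof -
  have u: "u \<in> Hom C \<sigma> \<alpha>" and v: "v \<in> Hom C \<tau> \<beta>" using U V by (simp_all add: unitary_def)
  have "cmp C (E \<alpha> \<beta>) (tns C u v) = cmp C (tns C v u) (E \<sigma> \<tau>)" using nat u v by blast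
  moreover have "cmp C (E \<alpha> \<beta>) (tns C u v) = tns C u v"
    using pid p id_l[OF tns_hom[OF u v]] by simp
  ultimately have e: "cmp C (tns C v u) (E \<sigma> \<tau>) = tns C u v" by simp
  show ?thesis by (rule solve[OF unitary_tns[OF V U] _ e]) (use hom in blast)
qed

definition a1 where "a1 \<sigma> = (SOME \<alpha>. \<alpha> \<in> S1 \<and> (\<exists>u. unitary C \<sigma> \<alpha> u))"
definition u1 where "u1 \<sigma> = (SOME u. unitary C \<sigma> (a1 \<sigma>) u)"
definition a2 where "a2 \<sigma> = (SOME \<alpha>. \<alpha> \<in> S2 \<and> (\<exists>u. unitary C \<sigma> \<alpha> u))"
definition u2 where "u2 \<sigma> = (SOME u. unitary C \<sigma> (a2 \<sigma>) u)"

lemma a1: "a1 \<sigma> \<in> S1" "unitary C \<sigma> (a1 \<sigma>) (u1 \<sigma>)"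
proof -
  have "\<exists>\<alpha>. \<alpha> \<in> S1 \<and> (\<exists>u. unitary C \<sigma> \<alpha> u)" using eS1 unfolding equivalent_subcat_def by blast
  hence h: "a1 \<sigma> \<in> S1 \<and> (\<exists>u. unitary C \<sigma> (a1 \<sigma>) u)" unfolding a1_def by (rule someI_ex)
  thus "a1 \<sigma> \<in> S1" by simp
  show "unitary C \<sigma> (a1 \<sigma>) (u1 \<sigma>)" unfolding u1_def using h by (metis someI_ex)
qed

lemma a2: "a2 \<sigma> \<in> S2" "unitary C \<sigma> (a2 \<sigma>) (u2 \<sigma>)"
proof -
  have "\<exists>\<alpha>. \<alpha> \<in> S2 \<and> (\<exists>u. unitary C \<sigma> \<alpha> u)" using eS2 unfolding equivalent_subcat_def by blast
  hence h: "a2 \<sigma> \<in> S2 \<and> (\<exists>u. unitary C \<sigma> (a2 \<sigma>) u)" unfolding a2_def by (rule someI_ex)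
  thus "a2 \<sigma> \<in> S2" by simp
  show "unitary C \<sigma> (a2 \<sigma>) (u2 \<sigma>)" unfolding u2_def using h by (metis someI_ex)
qed

definition eps where
  "eps \<sigma> \<tau> = cmp C (adj C (tns C (u2 \<tau>) (u1 \<sigma>))) (tns C (u1 \<sigma>) (u2 \<tau>))"

lemma eps_unitary: "unitary C (oprod C \<sigma> \<tau>) (oprod C \<tau> \<sigma>) (eps \<sigma> \<tau>)"
proof -
  have V: "unitary C (oprod C \<sigma> \<tau>) (oprod C (a1 \<sigma>) (a2 \<tau>)) (tns C (u1 \<sigma>) (u2 \<tau>))"
    using unitary_tns a1 a2 by blast
  have W: "unitary C (oprod C (a2 \<tau>) (a1 \<sigma>)) (oprod C \<tau> \<sigma>) (adj C (tns C (u2 \<tau>) (u1 \<sigma>)))"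
    using unitary_adj unitary_tns a1 a2 by blast
  have "oprod C (a1 \<sigma>) (a2 \<tau>) = oprod C (a2 \<tau>) (a1 \<sigma>)" using pcomm pS a1 a2 by blast
  thus ?thesis using unitary_cmp[OF V] W unfolding eps_def by simp
qed

lemma eps_hom: "eps \<sigma> \<tau> \<in> Hom C (oprod C \<sigma> \<tau>) (oprod C \<tau> \<sigma>)"
  using eps_unitary unitary_hom by blast

lemma eps_basic: "cmp C (tns C (u2 \<tau>) (u1 \<sigma>)) (eps \<sigma> \<tau>) = tns C (u1 \<sigma>) (u2 \<tau>)"
proof -
  have W: "unitary C (oprod C (a2 \<tau>) (a1 \<sigma>)) (oprod C \<tau> \<sigma>) (adj C (tns C (u2 \<tau>) (u1 \<sigma>)))"
    using unitary_adj unitary_tns a1 a2 by blast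
  have W0: "unitary C (oprod C \<tau> \<sigma>) (oprod C (a2 \<tau>) (a1 \<sigma>)) (tns C (u2 \<tau>) (u1 \<sigma>))"
    using unitary_tns a1 a2 by blast
  have "oprod C (a1 \<sigma>) (a2 \<tau>) = oprod C (a2 \<tau>) (a1 \<sigma>)" using pcomm pS a1 a2 by blast
  hence V: "tns C (u1 \<sigma>) (u2 \<tau>) \<in> Hom C (oprod C \<sigma> \<tau>) (oprod C (a2 \<tau>) (a1 \<sigma>))"
    using tns_hom a1 a2 unitary_hom by metis
  have "cmp C (tns C (u2 \<tau>) (u1 \<sigma>)) (eps \<sigma> \<tau>) =
     cmp C (cmp C (tns C (u2 \<tau>) (u1 \<sigma>)) (adj C (tns C (u2 \<tau>) (u1 \<sigma>)))) (tns C (u1 \<sigma>) (u2 \<tau>))"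
    unfolding eps_def using cmp_assoc[OF unitary_hom[OF W0] unitary_hom[OF W] V] .
  also have "\<dots> = tns C (u1 \<sigma>) (u2 \<tau>)" using W0 id_l[OF V] unfolding unitary_def by simp
  finally show ?thesis .
qed

lemma eps_perp: "perp \<rho>1 \<rho>2 \<Longrightarrow> eps \<rho>1 \<rho>2 = idm C (oprod C \<rho>1 \<rho>2)"
proof -
  assume p: "perp \<rho>1 \<rho>2"
  have u: "u1 \<rho>1 \<in> Hom C \<rho>1 (a1 \<rho>1)" and v: "u2 \<rho>2 \<in> Hom C \<rho>2 (a2 \<rho>2)"
    using a1 a2 unitary_hom by blast+
  have "tns C (u1 \<rho>1) (u2 \<rho>2) = tns C (u2 \<rho>2) (u1 \<rho>1)" using ptns[OF u v p] pS a1 a2 by blast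
  hence "eps \<rho>1 \<rho>2 = cmp C (tns C (adj C (u2 \<rho>2)) (adj C (u1 \<rho>1))) (tns C (u2 \<rho>2) (u1 \<rho>1))"
    unfolding eps_def using tns_adj[OF v u] by simp
  also have "\<dots> = tns C (cmp C (adj C (u2 \<rho>2)) (u2 \<rho>2)) (cmp C (adj C (u1 \<rho>1)) (u1 \<rho>1))"
    using interchange[OF adj_hom[OF v] v adj_hom[OF u] u] by simp
  also have "\<dots> = idm C (oprod C \<rho>2 \<rho>1)" using a1 a2 tns_idm unfolding unitary_def by simp
  finally show ?thesis using pcomm[OF p] by simp
qed

lemma eps_nat:
  assumes t1: "t1 \<in> Hom C \<sigma> \<sigma>'" and t2: "t2 \<in> Hom C \<tau> \<tau>'"
  shows "cmp C (eps \<sigma>' \<tau>') (tns C t1 t2) = cmp C (tns C t2 t1) (eps \<sigma> \<tau>)"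
proof -
  define u where "u = u1 \<sigma>"
  define v where "v = u2 \<tau>"
  define u' where "u' = u1 \<sigma>'"
  define v' where "v' = u2 \<tau>'"
  have U: "unitary C \<sigma> (a1 \<sigma>) u" and V: "unitary C \<tau> (a2 \<tau>) v"
   and U': "unitary C \<sigma>' (a1 \<sigma>') u'" and V': "unitary C \<tau>' (a2 \<tau>') v'"
    using a1 a2 u_def v_def u'_def v'_def by auto
  have u: "u \<in> Hom C \<sigma> (a1 \<sigma>)" and v: "v \<in> Hom C \<tau> (a2 \<tau>)"
   and u': "u' \<in> Hom C \<sigma>' (a1 \<sigma>')" and v': "v' \<in> Hom C \<tau>' (a2 \<tau>')"
    using U V U' V' unitary_hom by blast+
  define a where "a = cmp C (cmp C u' t1) (adj C u)"
  define b where "b = cmp C (cmp C v' t2) (adj C v)"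
  have ut: "cmp C u' t1 \<in> Hom C \<sigma> (a1 \<sigma>')" using cmp_hom[OF u' t1] .
  have vt: "cmp C v' t2 \<in> Hom C \<tau> (a2 \<tau>')" using cmp_hom[OF v' t2] .
  have a: "a \<in> Hom C (a1 \<sigma>) (a1 \<sigma>')" unfolding a_def using cmp_hom[OF ut adj_hom[OF u]] .
  have b: "b \<in> Hom C (a2 \<tau>) (a2 \<tau>')" unfolding b_def using cmp_hom[OF vt adj_hom[OF v]] .
  have au: "cmp C a u = cmp C u' t1"
    unfolding a_def using cmp_assoc[OF ut adj_hom[OF u] u, symmetric] U id_r[OF ut]
    unfolding unitary_def by simp
  have bv: "cmp C b v = cmp C v' t2"
    unfolding b_def using cmp_assoc[OF vt adj_hom[OF v] v, symmetric] V id_r[OF vt]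
    unfolding unitary_def by simp
  have ba: "tns C b a = tns C a b"
    using ptns[OF b a] pS psym a1 a2 by blast
  have ep: "eps \<sigma> \<tau> \<in> Hom C (oprod C \<sigma> \<tau>) (oprod C \<tau> \<sigma>)" by (rule eps_hom)
  have ep': "eps \<sigma>' \<tau>' \<in> Hom C (oprod C \<sigma>' \<tau>') (oprod C \<tau>' \<sigma>')" by (rule eps_hom)
  have t12: "tns C t1 t2 \<in> Hom C (oprod C \<sigma> \<tau>) (oprod C \<sigma>' \<tau>')" using tns_hom[OF t1 t2] .
  have t21: "tns C t2 t1 \<in> Hom C (oprod C \<tau> \<sigma>) (oprod C \<tau>' \<sigma>')" using tns_hom[OF t2 t1] .
  have W: "unitary C (oprod C \<tau>' \<sigma>') (oprod C (a2 \<tau>') (a1 \<sigma>')) (tns C v' u')"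
    using unitary_tns[OF V' U'] .
  have w: "tns C v' u' \<in> Hom C (oprod C \<tau>' \<sigma>') (oprod C (a2 \<tau>') (a1 \<sigma>'))" using unitary_hom[OF W] .
  have L: "cmp C (tns C v' u') (cmp C (eps \<sigma>' \<tau>') (tns C t1 t2)) = tns C (cmp C u' t1) (cmp C v' t2)"
  proof -
    have "cmp C (tns C v' u') (cmp C (eps \<sigma>' \<tau>') (tns C t1 t2))
       = cmp C (cmp C (tns C v' u') (eps \<sigma>' \<tau>')) (tns C t1 t2)" using cmp_assoc[OF w ep' t12] .
    also have "\<dots> = cmp C (tns C u' v') (tns C t1 t2)" using eps_basic u'_def v'_def by simp
    also have "\<dots> = tns C (cmp C u' t1) (cmp C v' t2)" using interchange[OF u' t1 v' t2] by simp
    finally show ?thesis .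
  qed
  have R: "cmp C (tns C v' u') (cmp C (tns C t2 t1) (eps \<sigma> \<tau>)) = tns C (cmp C u' t1) (cmp C v' t2)"
  proof -
    have "cmp C (tns C v' u') (cmp C (tns C t2 t1) (eps \<sigma> \<tau>))
       = cmp C (cmp C (tns C v' u') (tns C t2 t1)) (eps \<sigma> \<tau>)" using cmp_assoc[OF w t21 ep] .
    also have "\<dots> = cmp C (tns C (cmp C b v) (cmp C a u)) (eps \<sigma> \<tau>)"
      using interchange[OF v' t2 u' t1] au bv by simp
    also have "\<dots> = cmp C (cmp C (tns C b a) (tns C v u)) (eps \<sigma> \<tau>)"
      using interchange[OF b v a u] by simp
    also have "\<dots> = cmp C (tns C b a) (cmp C (tns C v u) (eps \<sigma> \<tau>))"
      using cmp_assoc[OF tns_hom[OF b a] tns_hom[OF v u] ep] by simp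
    also have "\<dots> = cmp C (tns C a b) (tns C u v)" using eps_basic u_def v_def ba by simp
    also have "\<dots> = tns C (cmp C a u) (cmp C b v)" using interchange[OF a u b v] by simp
    finally show ?thesis using au bv by simp
  qed
  have "cmp C (eps \<sigma>' \<tau>') (tns C t1 t2) = cmp C (adj C (tns C v' u')) (tns C (cmp C u' t1) (cmp C v' t2))"
    by (rule solve[OF W cmp_hom[OF ep' t12] L])
  also have "\<dots> = cmp C (tns C t2 t1) (eps \<sigma> \<tau>)"
    by (rule solve[OF W cmp_hom[OF t21 ep] R, symmetric])
  finally show ?thesis .
qed

lemma eps_char:
  assumes U: "unitary C \<sigma> \<alpha> u" and V: "unitary C \<tau> \<beta> v" and p: "perp \<alpha> \<beta>"
  shows "eps \<sigma> \<tau> = cmp C (adj C (tns C v u)) (tns C u v)"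
  by (rule gen[OF _ _ _ U V p]) (use eps_hom eps_nat eps_perp in blast)+

lemma eps_sym: "symmetry C eps"
  unfolding symmetry_def
proof (intro conjI allI ballI)
  fix \<sigma> \<tau> show "unitary C (oprod C \<sigma> \<tau>) (oprod C \<tau> \<sigma>) (eps \<sigma> \<tau>)" by (rule eps_unitary)
next
  fix \<sigma> \<tau>
  have u: "u1 \<sigma> \<in> Hom C \<sigma> (a1 \<sigma>)" and v: "u2 \<tau> \<in> Hom C \<tau> (a2 \<tau>)"
    using a1 a2 unitary_hom by blast+
  have "eps \<tau> \<sigma> = cmp C (adj C (tns C (u1 \<sigma>) (u2 \<tau>))) (tns C (u2 \<tau>) (u1 \<sigma>))"
    by (rule eps_char[OF a2(2) a1(2)]) (use psym pS a1 a2 in blast)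
  also have "\<dots> = adj C (eps \<sigma> \<tau>)"
  proof -
    have "oprod C (a1 \<sigma>) (a2 \<tau>) = oprod C (a2 \<tau>) (a1 \<sigma>)" using pcomm pS a1 a2 by blast
    hence uv: "tns C (u1 \<sigma>) (u2 \<tau>) \<in> Hom C (oprod C \<sigma> \<tau>) (oprod C (a2 \<tau>) (a1 \<sigma>))"
      using tns_hom[OF u v] by simp
    show ?thesis unfolding eps_def
      using adj_cmp[OF adj_hom[OF tns_hom[OF v u]] uv] adj_adj[OF tns_hom[OF v u]] by simp
  qed
  finally show "adj C (eps \<sigma> \<tau>) = eps \<tau> \<sigma>" by simp
next
  fix \<rho>
  have ui: "ounit C \<in> S1" "ounit C \<in> S2" using fS1 fS2 unfolding full_monoidal_subcat_def by auto
  have v: "u2 \<rho> \<in> Hom C \<rho> (a2 \<rho>)" and u: "u1 \<rho> \<in> Hom C \<rho> (a1 \<rho>)"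
    using a1 a2 unitary_hom by blast+
  have "eps (ounit C) \<rho> = cmp C (adj C (tns C (u2 \<rho>) (idm C (ounit C)))) (tns C (idm C (ounit C)) (u2 \<rho>))"
    by (rule eps_char[OF unitary_idm a2(2)]) (use pS ui a2 in blast)
  also have "\<dots> = idm C \<rho>" using tns_unit_l[OF v] tns_unit_r[OF v] a2(2) unfolding unitary_def by simp
  finally show "eps (ounit C) \<rho> = idm C \<rho>" .
  have "eps \<rho> (ounit C) = cmp C (adj C (tns C (idm C (ounit C)) (u1 \<rho>))) (tns C (u1 \<rho>) (idm C (ounit C)))"
    by (rule eps_char[OF a1(2) unitary_idm]) (use pS ui a1 in blast)
  also have "\<dots> = idm C \<rho>" using tns_unit_l[OF u] tns_unit_r[OF u] a1(2) unfolding unitary_def by simp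
  finally show "eps \<rho> (ounit C) = idm C \<rho>" .
next
  fix \<sigma> \<rho> \<tau>
  define e1 where "e1 = eps \<sigma> \<tau>"
  define e2 where "e2 = eps \<rho> \<tau>"
  have U1: "unitary C \<sigma> (a1 \<sigma>) (u1 \<sigma>)" and U2: "unitary C \<rho> (a1 \<rho>) (u1 \<rho>)"
    and V: "unitary C \<tau> (a2 \<tau>) (u2 \<tau>)" using a1 a2 by auto
  have u1: "u1 \<sigma> \<in> Hom C \<sigma> (a1 \<sigma>)" and u2: "u1 \<rho> \<in> Hom C \<rho> (a1 \<rho>)"
    and v: "u2 \<tau> \<in> Hom C \<tau> (a2 \<tau>)" using U1 U2 V unitary_hom by blast+
  have U: "unitary C (oprod C \<sigma> \<rho>) (oprod C (a1 \<sigma>) (a1 \<rho>)) (tns C (u1 \<sigma>) (u1 \<rho>))"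
    using unitary_tns[OF U1 U2] .
  have pp: "perp (oprod C (a1 \<sigma>) (a1 \<rho>)) (a2 \<tau>)"
    using pS fS1 a1 a2 unfolding full_monoidal_subcat_def by blast
  have p1: "perp (a1 \<sigma>) (a2 \<tau>)" and p2: "perp (a1 \<rho>) (a2 \<tau>)" using pS a1 a2 by blast+
  have k1: "cmp C (tns C (u2 \<tau>) (u1 \<sigma>)) e1 = tns C (u1 \<sigma>) (u2 \<tau>)" unfolding e1_def by (rule eps_basic)
  have k2: "cmp C (tns C (u2 \<tau>) (u1 \<rho>)) e2 = tns C (u1 \<rho>) (u2 \<tau>)" unfolding e2_def by (rule eps_basic)
  have h1: "e1 \<in> Hom C (oprod C \<sigma> \<tau>) (oprod C \<tau> \<sigma>)" unfolding e1_def by (rule eps_hom)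
  have h2: "e2 \<in> Hom C (oprod C \<rho> \<tau>) (oprod C \<tau> \<rho>)" unfolding e2_def by (rule eps_hom)
  have ha: "tns C e1 (idm C \<rho>) \<in> Hom C (oprod C \<sigma> (oprod C \<tau> \<rho>)) (oprod C \<tau> (oprod C \<sigma> \<rho>))"
    using tns_hom[OF h1 idm_hom] oassoc by metis
  have hb: "tns C (idm C \<sigma>) e2 \<in> Hom C (oprod C \<sigma> (oprod C \<rho> \<tau>)) (oprod C \<sigma> (oprod C \<tau> \<rho>))"
    using tns_hom[OF idm_hom h2] .
  have W: "unitary C (oprod C \<tau> (oprod C \<sigma> \<rho>)) (oprod C (a2 \<tau>) (oprod C (a1 \<sigma>) (a1 \<rho>)))
      (tns C (u2 \<tau>) (tns C (u1 \<sigma>) (u1 \<rho>)))" using unitary_tns[OF V U] .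
  have w: "tns C (u2 \<tau>) (tns C (u1 \<sigma>) (u1 \<rho>)) \<in> Hom C (oprod C \<tau> (oprod C \<sigma> \<rho>)) (oprod C (a2 \<tau>) (oprod C (a1 \<sigma>) (a1 \<rho>)))"
    using unitary_hom[OF W] .
  have "cmp C (tns C (u2 \<tau>) (tns C (u1 \<sigma>) (u1 \<rho>))) (cmp C (tns C e1 (idm C \<rho>)) (tns C (idm C \<sigma>) e2))
     = cmp C (cmp C (tns C (tns C (u2 \<tau>) (u1 \<sigma>)) (u1 \<rho>)) (tns C e1 (idm C \<rho>))) (tns C (idm C \<sigma>) e2)"
    using cmp_assoc[OF w ha hb] tns_assoc[OF v u1 u2] by simp
  also have "\<dots> = cmp C (tns C (cmp C (tns C (u2 \<tau>) (u1 \<sigma>)) e1) (cmp C (u1 \<rho>) (idm C \<rho>))) (tns C (idm C \<sigma>) e2)"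
    using interchange[OF tns_hom[OF v u1] h1 u2 idm_hom] by simp
  also have "\<dots> = cmp C (tns C (u1 \<sigma>) (tns C (u2 \<tau>) (u1 \<rho>))) (tns C (idm C \<sigma>) e2)"
    using k1 id_r[OF u2] tns_assoc[OF u1 v u2] by simp
  also have "\<dots> = tns C (cmp C (u1 \<sigma>) (idm C \<sigma>)) (cmp C (tns C (u2 \<tau>) (u1 \<rho>)) e2)"
    using interchange[OF u1 idm_hom tns_hom[OF v u2] h2] by simp
  also have "\<dots> = tns C (tns C (u1 \<sigma>) (u1 \<rho>)) (u2 \<tau>)"
    using k2 id_r[OF u1] tns_assoc[OF u1 u2 v] by simp
  finally have e: "cmp C (tns C (u2 \<tau>) (tns C (u1 \<sigma>) (u1 \<rho>))) (cmp C (tns C e1 (idm C \<rho>)) (tns C (idm C \<sigma>) e2))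
     = tns C (tns C (u1 \<sigma>) (u1 \<rho>)) (u2 \<tau>)" .
  have hab: "cmp C (tns C e1 (idm C \<rho>)) (tns C (idm C \<sigma>) e2) \<in> Hom C (oprod C (oprod C \<sigma> \<rho>) \<tau>) (oprod C \<tau> (oprod C \<sigma> \<rho>))"
    using cmp_hom[OF ha hb] oassoc by metis
  have "cmp C (tns C e1 (idm C \<rho>)) (tns C (idm C \<sigma>) e2) =
     cmp C (adj C (tns C (u2 \<tau>) (tns C (u1 \<sigma>) (u1 \<rho>)))) (tns C (tns C (u1 \<sigma>) (u1 \<rho>)) (u2 \<tau>))"
    by (rule solve[OF W hab e])
  also have "\<dots> = eps (oprod C \<sigma> \<rho>) \<tau>" by (rule eps_char[OF U V pp, symmetric])
  finally show "eps (oprod C \<sigma> \<rho>) \<tau> = cmp C (tns C (eps \<sigma> \<tau>) (idm C \<rho>)) (tns C (idm C \<sigma>) (eps \<rho> \<tau>))"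
    unfolding e1_def e2_def by simp
next
  fix \<sigma>1 \<tau>1 \<sigma>2 \<tau>2 t1 t2
  assume "t1 \<in> Hom C \<sigma>1 \<tau>1" "t2 \<in> Hom C \<sigma>2 \<tau>2"
  thus "cmp C (eps \<tau>1 \<tau>2) (tns C t1 t2) = cmp C (tns C t2 t1) (eps \<sigma>1 \<sigma>2)" by (rule eps_nat)
qed

lemma main: "\<exists>!\<epsilon>. symmetry C \<epsilon> \<and> (\<forall>\<rho>1 \<rho>2. perp \<rho>1 \<rho>2 \<longrightarrow> \<epsilon> \<rho>1 \<rho>2 = idm C (oprod C \<rho>1 \<rho>2))"
proof (rule ex1I[where a=eps])
  show "symmetry C eps \<and> (\<forall>\<rho>1 \<rho>2. perp \<rho>1 \<rho>2 \<longrightarrow> eps \<rho>1 \<rho>2 = idm C (oprod C \<rho>1 \<rho>2))"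
    using eps_sym eps_perp by blast
next
  fix E assume E: "symmetry C E \<and> (\<forall>\<rho>1 \<rho>2. perp \<rho>1 \<rho>2 \<longrightarrow> E \<rho>1 \<rho>2 = idm C (oprod C \<rho>1 \<rho>2))"
  show "E = eps"
  proof (rule ext, rule ext)
    fix \<sigma> \<tau>
    have p: "perp (a1 \<sigma>) (a2 \<tau>)" using pS a1 a2 by blast
    have hom: "\<forall>\<sigma> \<tau>. E \<sigma> \<tau> \<in> Hom C (oprod C \<sigma> \<tau>) (oprod C \<tau> \<sigma>)"
      using E unfolding symmetry_def unitary_def by blast
    have nat: "\<forall>\<sigma>1 \<tau>1 \<sigma>2 \<tau>2. \<forall>t1\<in>Hom C \<sigma>1 \<tau>1. \<forall>t2\<in>Hom C \<sigma>2 \<tau>2.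
        cmp C (E \<tau>1 \<tau>2) (tns C t1 t2) = cmp C (tns C t2 t1) (E \<sigma>1 \<sigma>2)"
      using E unfolding symmetry_def by blast
    have "E \<sigma> \<tau> = cmp C (adj C (tns C (u2 \<tau>) (u1 \<sigma>))) (tns C (u1 \<sigma>) (u2 \<tau>))"
      by (rule gen[OF hom nat _ a1(2) a2(2) p]) (use E in blast)
    thus "E \<sigma> \<tau> = eps \<sigma> \<tau>" unfolding eps_def .
  qed
qed

end

theorem lemmaA2:
  fixes C :: "('o, 'm::banach) mcstar" and perp :: "'o \<Rightarrow> 'o \<Rightarrow> bool"
  assumes "monoidal_cstar_category C"
    and "\<forall>a b. perp a b \<longrightarrow> perp b a"
    and "\<forall>a b. perp a b \<longrightarrow> oprod C a b = oprod C b a"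
    and "\<forall>\<sigma>1 \<tau>1 \<sigma>2 \<tau>2. \<forall>t1\<in>Hom C \<sigma>1 \<tau>1. \<forall>t2\<in>Hom C \<sigma>2 \<tau>2.
           perp \<sigma>1 \<sigma>2 \<and> perp \<tau>1 \<tau>2 \<longrightarrow> tns C t1 t2 = tns C t2 t1"
    and "\<exists>S1 S2. full_monoidal_subcat C S1 \<and> equivalent_subcat C S1 \<and>
                full_monoidal_subcat C S2 \<and> equivalent_subcat C S2 \<and>
                (\<forall>\<rho>1\<in>S1. \<forall>\<rho>2\<in>S2. perp \<rho>1 \<rho>2)"
  shows "\<exists>!\<epsilon>. symmetry C \<epsilon> \<and>
           (\<forall>\<rho>1 \<rho>2. perp \<rho>1 \<rho>2 \<longrightarrow> \<epsilon> \<rho>1 \<rho>2 = idm C (oprod C \<rho>1 \<rho>2))"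
proof -
  obtain S1 S2 where S: "full_monoidal_subcat C S1" "equivalent_subcat C S1"
      "full_monoidal_subcat C S2" "equivalent_subcat C S2" "\<forall>\<rho>1\<in>S1. \<forall>\<rho>2\<in>S2. perp \<rho>1 \<rho>2"
    using assms(5) by blast
  interpret ms C perp S1 S2
  proof (unfold_locales)
    show "monoidal_cstar_category C" by (rule assms(1))
  qed (use assms S in blast)+
  show ?thesis by (rule main)
qed

end
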